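(* Let $i\in\{1,2\}$, let $Z$ be a digital image and $\tau:Z\times Z\to Z$ an $\mathrm{NP}_i$-continuous map. Let $X=Z\sqcup\{e\}$ be the disjoint union, where the new point $e$ is adjacent only to itself, and define $\mu:X\times X\to X$ by $\mu(a,b)=\tau(a,b)$ if $a,b\in Z$, $\mu(a,e)=a$, and $\mu(e,b)=b$. Then $\mu$ is $\mathrm{NP}_i$-continuous and $(X,e,\mu)$ is a unital $\mathrm{NP}_i$-digital H-space. Moreover, if some connected component of $Z$ is not $\mathrm{NP}_i$-contractible, then $(X,e,\mu)$ is not H-equivalent to any $\mathrm{NP}_i$-digital topological group.
   Context: A digital image is a finite set with a reflexive symmetric adjacency relation (a finite reflexive graph); continuous maps send adjacent points to adjacent points. On products, $\mathrm{NP}_u$ declares two tuples adjacent iff coordinates are adjacent in at most $u$ positions and equal elsewhere. An $\mathrm{NP}_i$-homotopy from $f$ to $g:X\to Y$ is an $\mathrm{NP}_i$-continuous $H:X\times[0,m]_{\mathbb{Z}}\to Y$ with $H(\cdot,0)=f$, $H(\cdot,m)=g$; write $f\simeq_i g$. $\mathrm{NP}_i$-contractible means $\mathrm{NP}_i$-homotopy equivalent to a single point. $(f,g)(x)=(f(x),g(x))$, $(f\times g)(x,y)=(f(x),g(y))$; $c_e$ is constant at $e$. An $\mathrm{NP}_i$-digital H-space is $(X,e,\mu)$ with $\mu:X\times X\to X$ $\mathrm{NP}_i$-continuous, $\mu\circ(\mathrm{id}_X,c_e)\simeq_i\mathrm{id}_X$, $\mu\circ(c_e,\mathrm{id}_X)\simeq_i\mathrm{id}_X$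 (homotopies need not be pointed); unital if both composites equal $\mathrm{id}_X$. An $\mathrm{NP}_i$-digital topological group is a digital image $G$ with a group structure whose multiplication $G\times G\to G$ is $\mathrm{NP}_i$-continuous and whose inversion $G\to G$ is continuous; it is regarded as an H-space with its identity element and multiplication. Two H-spaces $(X,e_X,\mu_X)$, $(Y,e_Y,\mu_Y)$ are H-equivalent if there are continuous pointed maps $f:(X,e_X)\to(Y,e_Y)$, $g:(Y,e_Y)\to(X,e_X)$ with $f\circ g\simeq_i\mathrm{id}_Y$, $g\circ f\simeq_i\mathrm{id}_X$, $f\circ\mu_X\simeq_i\mu_Y\circ(f\times f)$, $g\circ\mu_Y\simeq_i\mu_X\circ(g\times g)$. *)

theory Defs
  imports "HOL-Algebra.Group"
begin

definition digital_image :: "'a set \<Rightarrow> ('a \<Rightarrow> 'a \<Rightarrow> bool) \<Rightarrow> bool" where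
  "digital_image X A \<longleftrightarrow> finite X \<and> (\<forall>x\<in>X. A x x) \<and> (\<forall>x\<in>X. \<forall>y\<in>X. A x y \<longrightarrow> A y x)"

definition dcont :: "'a set \<Rightarrow> ('a \<Rightarrow> 'a \<Rightarrow> bool) \<Rightarrow> 'b set \<Rightarrow> ('b \<Rightarrow> 'b \<Rightarrow> bool) \<Rightarrow> ('a \<Rightarrow> 'b) \<Rightarrow> bool" where
  "dcont X A Y B f \<longleftrightarrow> (\<forall>x\<in>X. f x \<in> Y) \<and> (\<forall>x\<in>X. \<forall>x'\<in>X. A x x' \<longrightarrow> B (f x) (f x'))"

definition ndiff :: "'a \<Rightarrow> 'a \<Rightarrow> nat" where
  "ndiff x y = (if x = y then 0 else 1)"

definition pair_adj :: "('a \<Rightarrow> 'a \<Rightarrow> bool) \<Rightarrow> ('b \<Rightarrow> 'b \<Rightarrow> bool) \<Rightarrow> 'a \<times> 'b \<Rightarrow> 'a \<times> 'b \<Rightarrow> bool" where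
  "pair_adj A B p q \<longleftrightarrow> A (fst p) (fst q) \<and> B (snd p) (snd q)"

definition pair_ndiff :: "'a \<times> 'b \<Rightarrow> 'a \<times> 'b \<Rightarrow> nat" where
  "pair_ndiff p q = ndiff (fst p) (fst q) + ndiff (snd p) (snd q)"

definition np_adj :: "nat \<Rightarrow> ('a \<Rightarrow> 'a \<Rightarrow> bool) \<Rightarrow> ('b \<Rightarrow> 'b \<Rightarrow> bool) \<Rightarrow> 'a \<times> 'b \<Rightarrow> 'a \<times> 'b \<Rightarrow> bool" where
  "np_adj u A B p q \<longleftrightarrow> pair_adj A B p q \<and> pair_ndiff p q \<le> u"

definition iadj :: "nat \<Rightarrow> nat \<Rightarrow> bool" where
  "iadj s t \<longleftrightarrow> s \<le> t + 1 \<and> t \<le> s + 1"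

text \<open>NP_u-homotopy between maps S \<rightarrow> Y, where the domain S is itself a (flat) product
  of factors, given by the coordinatewise adjacency A and the count d of differing
  coordinates.\<close>
definition np_htpy_gen :: "nat \<Rightarrow> 's set \<Rightarrow> ('s \<Rightarrow> 's \<Rightarrow> bool) \<Rightarrow> ('s \<Rightarrow> 's \<Rightarrow> nat)
    \<Rightarrow> 'b set \<Rightarrow> ('b \<Rightarrow> 'b \<Rightarrow> bool) \<Rightarrow> ('s \<Rightarrow> 'b) \<Rightarrow> ('s \<Rightarrow> 'b) \<Rightarrow> bool" where
  "np_htpy_gen u S A d Y B f g \<longleftrightarrow>
     (\<exists>(m::nat) (H :: 's \<times> nat \<Rightarrow> 'b).
        (\<forall>s\<in>S. H (s, 0) = f s \<and> H (s, m) = g s) \<and>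
        (\<forall>s\<in>S. \<forall>t\<in>{0..m}. H (s, t) \<in> Y) \<and>
        (\<forall>s\<in>S. \<forall>s'\<in>S. \<forall>t\<in>{0..m}. \<forall>t'\<in>{0..m}.
            A s s' \<and> iadj t t' \<and> d s s' + ndiff t t' \<le> u \<longrightarrow> B (H (s, t)) (H (s', t'))))"

definition np_htpy :: "nat \<Rightarrow> 'a set \<Rightarrow> ('a \<Rightarrow> 'a \<Rightarrow> bool) \<Rightarrow> 'b set \<Rightarrow> ('b \<Rightarrow> 'b \<Rightarrow> bool)
    \<Rightarrow> ('a \<Rightarrow> 'b) \<Rightarrow> ('a \<Rightarrow> 'b) \<Rightarrow> bool" where
  "np_htpy u X A Y B f g \<longleftrightarrow> np_htpy_gen u X A ndiff Y B f g"

definition np_htpy2 :: "nat \<Rightarrow> 'a set \<Rightarrow> ('a \<Rightarrow> 'a \<Rightarrow> bool) \<Rightarrow> 'b set \<Rightarrow> ('b \<Rightarrow> 'b \<Rightarrow> bool)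
    \<Rightarrow> ('a \<times> 'a \<Rightarrow> 'b) \<Rightarrow> ('a \<times> 'a \<Rightarrow> 'b) \<Rightarrow> bool" where
  "np_htpy2 u X A Y B f g \<longleftrightarrow> np_htpy_gen u (X \<times> X) (pair_adj A A) pair_ndiff Y B f g"

definition np_hequiv :: "nat \<Rightarrow> 'a set \<Rightarrow> ('a \<Rightarrow> 'a \<Rightarrow> bool) \<Rightarrow> 'b set \<Rightarrow> ('b \<Rightarrow> 'b \<Rightarrow> bool) \<Rightarrow> bool" where
  "np_hequiv u X A Y B \<longleftrightarrow> (\<exists>f g. dcont X A Y B f \<and> dcont Y B X A g \<and>
      np_htpy u X A X A (g \<circ> f) id \<and> np_htpy u Y B Y B (f \<circ> g) id)"

definition np_contractible :: "nat \<Rightarrow> 'a set \<Rightarrow> ('a \<Rightarrow> 'a \<Rightarrow> bool) \<Rightarrow> bool" where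
  "np_contractible u X A \<longleftrightarrow> np_hequiv u X A ({()} :: unit set) (\<lambda>_ _. True)"

definition dcomponent :: "'a set \<Rightarrow> ('a \<Rightarrow> 'a \<Rightarrow> bool) \<Rightarrow> 'a \<Rightarrow> 'a set" where
  "dcomponent X A x = {y \<in> X. (\<lambda>a b. a \<in> X \<and> b \<in> X \<and> A a b)\<^sup>*\<^sup>* x y}"

definition np_hspace :: "nat \<Rightarrow> 'a set \<Rightarrow> ('a \<Rightarrow> 'a \<Rightarrow> bool) \<Rightarrow> 'a \<Rightarrow> ('a \<times> 'a \<Rightarrow> 'a) \<Rightarrow> bool" where
  "np_hspace u X A e \<mu> \<longleftrightarrow> digital_image X A \<and> e \<in> X \<and>
     dcont (X \<times> X) (np_adj u A A) X A \<mu> \<and>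
     np_htpy u X A X A (\<lambda>x. \<mu> (x, e)) id \<and> np_htpy u X A X A (\<lambda>x. \<mu> (e, x)) id"

definition np_unital_hspace :: "nat \<Rightarrow> 'a set \<Rightarrow> ('a \<Rightarrow> 'a \<Rightarrow> bool) \<Rightarrow> 'a \<Rightarrow> ('a \<times> 'a \<Rightarrow> 'a) \<Rightarrow> bool" where
  "np_unital_hspace u X A e \<mu> \<longleftrightarrow> np_hspace u X A e \<mu> \<and> (\<forall>x\<in>X. \<mu> (x, e) = x \<and> \<mu> (e, x) = x)"

definition np_dtop_group :: "nat \<Rightarrow> 'g monoid \<Rightarrow> ('g \<Rightarrow> 'g \<Rightarrow> bool) \<Rightarrow> bool" where
  "np_dtop_group u G B \<longleftrightarrow> group G \<and> digital_image (carrier G) B \<and>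
     dcont (carrier G \<times> carrier G) (np_adj u B B) (carrier G) B (\<lambda>p. fst p \<otimes>\<^bsub>G\<^esub> snd p) \<and>
     dcont (carrier G) B (carrier G) B (\<lambda>x. inv\<^bsub>G\<^esub> x)"

definition np_h_equiv :: "nat \<Rightarrow> 'a set \<Rightarrow> ('a \<Rightarrow> 'a \<Rightarrow> bool) \<Rightarrow> 'a \<Rightarrow> ('a \<times> 'a \<Rightarrow> 'a)
    \<Rightarrow> 'b set \<Rightarrow> ('b \<Rightarrow> 'b \<Rightarrow> bool) \<Rightarrow> 'b \<Rightarrow> ('b \<times> 'b \<Rightarrow> 'b) \<Rightarrow> bool" where
  "np_h_equiv u X A eX \<mu>X Y B eY \<mu>Y \<longleftrightarrow>
     (\<exists>f g. dcont X A Y B f \<and> f eX = eY \<and> dcont Y B X A g \<and> g eY = eX \<and>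
        np_htpy u Y B Y B (f \<circ> g) id \<and> np_htpy u X A X A (g \<circ> f) id \<and>
        np_htpy2 u X A Y B (f \<circ> \<mu>X) (\<mu>Y \<circ> map_prod f f) \<and>
        np_htpy2 u Y B X A (g \<circ> \<mu>Y) (\<mu>X \<circ> map_prod g g))"

text \<open>Adjoining an isolated point e = None to Z, and the extended multiplication.\<close>
definition adj_point_adj :: "('a \<Rightarrow> 'a \<Rightarrow> bool) \<Rightarrow> 'a option \<Rightarrow> 'a option \<Rightarrow> bool" where
  "adj_point_adj A a b = (case (a, b) of (Some x, Some y) \<Rightarrow> A x y
                                       | (None, None) \<Rightarrow> True
                                       | _ \<Rightarrow> False)"

definition adj_point_mult :: "('a \<times> 'a \<Rightarrow> 'a) \<Rightarrow> 'a option \<times> 'a option \<Rightarrow> 'a option" where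
  "adj_point_mult \<tau> p = (case p of (Some x, Some y) \<Rightarrow> Some (\<tau> (x, y))
                                 | (a, None) \<Rightarrow> a
                                 | (None, b) \<Rightarrow> b)"

end

theory Submission
  imports Defs
begin

lemma adj_Some[simp]: "adj_point_adj A (Some x) (Some y) = A x y"
  by (simp add: adj_point_adj_def)
lemma adj_None[simp]: "adj_point_adj A None None"
  "adj_point_adj A None (Some y) = False" "adj_point_adj A (Some x) None = False"
  by (simp_all add: adj_point_adj_def)
lemma mult_simps[simp]: "adj_point_mult \<tau> (Some x, Some y) = Some (\<tau> (x, y))"
  "adj_point_mult \<tau> (a, None) = a" "adj_point_mult \<tau> (None, b) = b"
  by (simp_all add: adj_point_mult_def split: option.splits)
lemma ndiff_Some[simp]: "ndiff (Some x) (Some y) = ndiff x y"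
  by (simp add: ndiff_def)

lemma mult_cont:
  assumes "dcont (Z \<times> Z) (np_adj i adjZ adjZ) Z adjZ \<tau>"
  shows "dcont (insert None (Some ` Z) \<times> insert None (Some ` Z))
            (np_adj i (adj_point_adj adjZ) (adj_point_adj adjZ))
            (insert None (Some ` Z)) (adj_point_adj adjZ) (adj_point_mult \<tau>)"
  unfolding dcont_def
proof (intro conjI ballI impI)
  fix p assume "p \<in> insert None (Some ` Z) \<times> insert None (Some ` Z)"
  then show "adj_point_mult \<tau> p \<in> insert None (Some ` Z)"
    using assms unfolding dcont_def by auto
next
  fix p q assume p: "p \<in> insert None (Some ` Z) \<times> insert None (Some ` Z)"
    and q: "q \<in> insert None (Some ` Z) \<times> insert None (Some ` Z)"
    and adj: "np_adj i (adj_point_adj adjZ) (adj_point_adj adjZ) p q"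
  obtain a b where pab: "p = (a, b)" by fastforce
  obtain a' b' where qab: "q = (a', b')" by fastforce
  show "adj_point_adj adjZ (adj_point_mult \<tau> p) (adj_point_mult \<tau> q)"
  proof (cases a)
    case None
    then show ?thesis using adj pab qab
      by (cases a'; cases b; cases b'; auto simp: np_adj_def pair_adj_def)
  next
    case (Some x)
    show ?thesis
    proof (cases b)
      case None
      then show ?thesis using adj pab qab Some
        by (cases a'; cases b'; auto simp: np_adj_def pair_adj_def)
    next
      case (Some y)
      then obtain x' y' where "a' = Some x'" "b' = Some y'"
        using adj pab qab \<open>a = Some x\<close>
        by (cases a'; cases b'; auto simp: np_adj_def pair_adj_def)
      then show ?thesis using adj pab qab Some \<open>a = Some x\<close> p q assms
        unfolding dcont_def
        by (auto simp: np_adj_def pair_adj_def pair_ndiff_def)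
    qed
  qed
qed

definition cat :: "('s \<times> nat \<Rightarrow> 'b) \<Rightarrow> ('s \<times> nat \<Rightarrow> 'b) \<Rightarrow> nat \<Rightarrow> 's \<times> nat \<Rightarrow> 'b" where
  "cat P Q m1 = (\<lambda>(s,t). if t \<le> m1 then P (s,t) else Q (s, t - m1))"

lemma cat_mem:
  assumes "\<forall>s\<in>S. \<forall>t\<le>m1. P (s,t) \<in> Y" "\<forall>s\<in>S. \<forall>t\<le>m2. Q (s,t) \<in> Y"
    "s \<in> S" "t \<le> m1 + m2"
  shows "cat P Q m1 (s,t) \<in> Y"
  using assms by (auto simp: cat_def)

lemma cat_cont:
  assumes j: "\<forall>s\<in>S. P (s, m1) = Q (s, 0)"
    and cP: "\<forall>s\<in>S. \<forall>s'\<in>S. \<forall>t\<le>m1. \<forall>t'\<le>m1. A s s' \<and> iadj t t' \<and> d s s' + ndiff t t' \<le> u \<longrightarrow> Bb (P (s,t)) (P (s',t'))"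
    and cQ: "\<forall>s\<in>S. \<forall>s'\<in>S. \<forall>t\<le>m2. \<forall>t'\<le>m2. A s s' \<and> iadj t t' \<and> d s s' + ndiff t t' \<le> u \<longrightarrow> Bb (Q (s,t)) (Q (s',t'))"
    and s: "s \<in> S" "s' \<in> S" and t: "t \<le> m1 + m2" "t' \<le> m1 + m2"
    and h: "A s s'" "iadj t t'" "d s s' + ndiff t t' \<le> u"
  shows "Bb (cat P Q m1 (s,t)) (cat P Q m1 (s',t'))"
proof (cases "t \<le> m1")
  case True
  show ?thesis
  proof (cases "t' \<le> m1")
    case True
    then show ?thesis using \<open>t \<le> m1\<close> cP s h by (auto simp: cat_def)
  next
    case False
    then have "t = m1" "t' = Suc m1" using \<open>t \<le> m1\<close> h(2) by (auto simp: iadj_def)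
    moreover have "Bb (Q (s,0)) (Q (s',1))"
      using cQ s h t \<open>t = m1\<close> \<open>t' = Suc m1\<close> by (auto simp: iadj_def ndiff_def)
    ultimately show ?thesis using j s by (auto simp: cat_def)
  qed
next
  case False
  show ?thesis
  proof (cases "t' \<le> m1")
    case True
    then have "t' = m1" "t = Suc m1" using False h(2) by (auto simp: iadj_def)
    moreover have "Bb (Q (s,1)) (Q (s',0))"
      using cQ s h t \<open>t' = m1\<close> \<open>t = Suc m1\<close> by (auto simp: iadj_def ndiff_def)
    ultimately show ?thesis using j s by (auto simp: cat_def)
  next
    case True': False
    have "iadj (t - m1) (t' - m1)" using h(2) False True' by (auto simp: iadj_def)
    moreover have "ndiff (t - m1) (t' - m1) = ndiff t t'" using False True' by (auto simp: ndiff_def)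
    ultimately show ?thesis using cQ s h t False True' by (auto simp: cat_def)
  qed
qed

lemma chain_rtranclp:
  assumes "\<forall>t<N. r (P (Suc t)) (P t)" and "t \<le> N"
  shows "r\<^sup>*\<^sup>* (P N) (P t)"
proof -
  have "\<forall>t. t + k = N \<longrightarrow> r\<^sup>*\<^sup>* (P N) (P t)" for k
  proof (induction k)
    case 0 then show ?case by auto
  next
    case (Suc k)
    show ?case
    proof (intro allI impI)
      fix t assume "t + Suc k = N"
      then have "r\<^sup>*\<^sup>* (P N) (P (Suc t))" "r (P (Suc t)) (P t)" using Suc assms(1) by auto
      then show "r\<^sup>*\<^sup>* (P N) (P t)" by (rule rtranclp.rtrancl_into_rtrancl)
    qed
  qed
  then have "t + (N - t) = N \<longrightarrow> r\<^sup>*\<^sup>* (P N) (P t)" by blast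
  then show ?thesis using assms(2) by simp
qed

lemma dcont_rtranclp:
  assumes "dcont X A Y B h" "(\<lambda>a b. a\<in>X \<and> b\<in>X \<and> A a b)\<^sup>*\<^sup>* x y" "x \<in> X"
  shows "(\<lambda>a b. a\<in>Y \<and> b\<in>Y \<and> B a b)\<^sup>*\<^sup>* (h x) (h y)"
  using assms(2)
proof (induction rule: rtranclp_induct)
  case base then show ?case by simp
next
  case (step y z)
  then have hs: "(\<lambda>a b. a\<in>Y \<and> b\<in>Y \<and> B a b) (h y) (h z)" using assms(1) unfolding dcont_def by auto
  show ?case using step.IH hs by (rule rtranclp.rtrancl_into_rtrancl)
qed

lemma RX_Some:
  assumes "(\<lambda>a b. a\<in>X \<and> b\<in>X \<and> adj_point_adj A a b)\<^sup>*\<^sup>* (Some c) y" "X = insert None (Some ` Z)" "c \<in> Z"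
  shows "\<exists>c'. y = Some c' \<and> c' \<in> Z \<and> (\<lambda>a b. a\<in>Z \<and> b\<in>Z \<and> A a b)\<^sup>*\<^sup>* c c'"
  using assms(1)
proof (induction rule: rtranclp_induct)
  case base then show ?case using assms by auto
next
  case (step y z)
  then obtain c' where c': "y = Some c'" "c' \<in> Z" "(\<lambda>a b. a\<in>Z \<and> b\<in>Z \<and> A a b)\<^sup>*\<^sup>* c c'" by auto
  then obtain c'' where "z = Some c''" "c'' \<in> Z" "A c' c''" using step(2) assms(2)
    by (cases z) auto
  moreover have "(\<lambda>a b. a\<in>Z \<and> b\<in>Z \<and> A a b) c' c''" using c' \<open>c'' \<in> Z\<close> \<open>A c' c''\<close> by simp
  ultimately show ?case using c' rtranclp.rtrancl_into_rtrancl[OF c'(3)] by blast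
qed

lemma RX_None:
  assumes "(\<lambda>a b. a\<in>X \<and> b\<in>X \<and> adj_point_adj A a b)\<^sup>*\<^sup>* None y"
  shows "y = None"
  using assms
proof (induction rule: rtranclp_induct)
  case base then show ?case by simp
next
  case (step y z) then show ?case by (cases z) auto
qed


lemma part3:
  fixes G :: "'g monoid" (structure)
  assumes i: "1 \<le> i"
    and dZ: "digital_image Z adjZ"
    and z: "z \<in> Z"
    and grp: "np_dtop_group i G B"
    and heq: "np_h_equiv i (insert None (Some ` Z)) (adj_point_adj adjZ) None \<mu>
                   (carrier G) B (one G) mG"
  shows "np_contractible i (dcomponent Z adjZ z) adjZ"
proof -
  define X where "X = insert None (Some ` Z)"
  define AX where "AX = adj_point_adj adjZ"
  define RZ where "RZ = (\<lambda>a b. a \<in> Z \<and> b \<in> Z \<and> adjZ a b)"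
  define RX where "RX = (\<lambda>a b. a \<in> X \<and> b \<in> X \<and> AX a b)"
  define RG where "RG = (\<lambda>a b. a \<in> carrier G \<and> b \<in> carrier G \<and> B a b)"
  define C where "C = dcomponent Z adjZ z"
  have Cdef: "C = {y\<in>Z. RZ\<^sup>*\<^sup>* z y}" by (simp add: C_def dcomponent_def RZ_def)
  have CZ: "C \<subseteq> Z" using Cdef by auto
  have zC: "z \<in> C" using Cdef z by auto
  have reflZ: "\<And>x. x \<in> Z \<Longrightarrow> adjZ x x" using dZ by (simp add: digital_image_def)
  from heq obtain f g where
    f: "dcont X AX (carrier G) B f" and f1: "f None = (one G)" and
    g: "dcont (carrier G) B X AX g" and g1: "g (one G) = None" and
    h1: "np_htpy i (carrier G) B (carrier G) B (f \<circ> g) id" and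
    h2: "np_htpy i X AX X AX (g \<circ> f) id"
    unfolding np_h_equiv_def X_def AX_def by blast
  from h1 obtain m1 H1 where
    H1a: "\<forall>s\<in>carrier G. H1 (s, 0) = (f \<circ> g) s \<and> H1 (s, m1) = id s" and
    H1b: "\<forall>s\<in>carrier G. \<forall>t\<in>{0..m1}. H1 (s, t) \<in> carrier G" and
    H1c: "\<forall>s\<in>carrier G. \<forall>s'\<in>carrier G. \<forall>t\<in>{0..m1}. \<forall>t'\<in>{0..m1}.
            B s s' \<and> iadj t t' \<and> ndiff s s' + ndiff t t' \<le> i \<longrightarrow> B (H1 (s, t)) (H1 (s', t'))"
    unfolding np_htpy_def np_htpy_gen_def by blast
  from h2 obtain m2 H2 where
    H2a: "\<forall>s\<in>X. H2 (s, 0) = (g \<circ> f) s \<and> H2 (s, m2) = id s" and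
    H2b: "\<forall>s\<in>X. \<forall>t\<in>{0..m2}. H2 (s, t) \<in> X" and
    H2c: "\<forall>s\<in>X. \<forall>s'\<in>X. \<forall>t\<in>{0..m2}. \<forall>t'\<in>{0..m2}.
            AX s s' \<and> iadj t t' \<and> ndiff s s' + ndiff t t' \<le> i \<longrightarrow> AX (H2 (s, t)) (H2 (s', t'))"
    unfolding np_htpy_def np_htpy_gen_def by blast
  have G: "group G" and digG: "digital_image (carrier G) B"
    and mc: "dcont (carrier G \<times> carrier G) (np_adj i B B) (carrier G) B (\<lambda>p. fst p \<otimes>\<^bsub>G\<^esub> snd p)"
    using grp by (auto simp: np_dtop_group_def)
  interpret group G by (rule G)
  have reflG: "\<And>x. x \<in> carrier G \<Longrightarrow> B x x" using digG by (simp add: digital_image_def)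
  have lm: "dcont (carrier G) B (carrier G) B (\<lambda>y. b \<otimes> y)" if b: "b \<in> carrier G" for b
    unfolding dcont_def
  proof (intro conjI ballI impI)
    fix y assume "y \<in> carrier G" then show "b \<otimes> y \<in> carrier G" using b by simp
  next
    fix y y' assume y: "y \<in> carrier G" "y' \<in> carrier G" "B y y'"
    have "np_adj i B B (b, y) (b, y')"
      using y b reflG i by (auto simp: np_adj_def pair_adj_def pair_ndiff_def ndiff_def)
    moreover have "\<forall>p\<in>carrier G \<times> carrier G. \<forall>q\<in>carrier G \<times> carrier G.
        np_adj i B B p q \<longrightarrow> B (fst p \<otimes> snd p) (fst q \<otimes> snd q)"
      using mc by (simp add: dcont_def)
    ultimately show "B (b \<otimes> y) (b \<otimes> y')" using y b by auto
  qed
  have fX: "\<And>x. x \<in> X \<Longrightarrow> f x \<in> carrier G" using f by (simp add: dcont_def)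
  have gX: "\<And>x. x \<in> carrier G \<Longrightarrow> g x \<in> X" using g by (simp add: dcont_def)
  have SomeX: "\<And>c. c \<in> Z \<Longrightarrow> Some c \<in> X" by (simp add: X_def)
  define a where "a = f (Some z)"
  have aG: "a \<in> carrier G" using fX SomeX z a_def by simp
  define w where "w c = inv a \<otimes> f (Some c)" for c
  have wG: "\<And>c. c \<in> Z \<Longrightarrow> w c \<in> carrier G" using aG fX SomeX w_def by simp
  have gw: "g (w c) = None" if c: "c \<in> C" for c
  proof -
    have r1: "RZ\<^sup>*\<^sup>* z c" using c Cdef by auto
    have dS: "dcont Z adjZ X AX Some" by (simp add: dcont_def X_def AX_def)
    have r2: "RX\<^sup>*\<^sup>* (Some z) (Some c)"
      using dcont_rtranclp[OF dS, of z c] r1 z unfolding RZ_def RX_def by simp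
    have r3: "RG\<^sup>*\<^sup>* a (f (Some c))"
      using dcont_rtranclp[OF f, of "Some z" "Some c"] r2 SomeX z unfolding RX_def RG_def a_def by simp
    have r4: "RG\<^sup>*\<^sup>* (inv a \<otimes> a) (w c)"
      using dcont_rtranclp[OF lm[of "inv a"], of a "f (Some c)"] r3 aG unfolding RG_def w_def by simp
    then have r4': "RG\<^sup>*\<^sup>* \<one> (w c)" using aG by simp
    have r5: "RX\<^sup>*\<^sup>* (g \<one>) (g (w c))"
      using dcont_rtranclp[OF g, of \<one> "w c"] r4' unfolding RG_def RX_def by simp
    then show ?thesis using g1 RX_None[of X adjZ "g (w c)"] unfolding RX_def AX_def by simp
  qed
  define P where "P = (\<lambda>(c, t). g (a \<otimes> H1 (w c, t)))"
  define Q where "Q = (\<lambda>(c::'a, t). H2 (Some c, t))"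
  define L where "L = cat P Q m1"
  have jPQ: "\<forall>s\<in>Z. P (s, m1) = Q (s, 0)"
  proof
    fix s assume s: "s \<in> Z"
    have "a \<otimes> w s = f (Some s)" using aG fX SomeX s w_def by (simp add: m_assoc[symmetric])
    then show "P (s, m1) = Q (s, 0)" using H1a H2a wG s SomeX by (simp add: P_def Q_def)
  qed
  have memP: "\<forall>s\<in>Z. \<forall>t\<le>m1. P (s,t) \<in> X"
    using H1b wG aG gX by (simp add: P_def)
  have memQ: "\<forall>s\<in>Z. \<forall>t\<le>m2. Q (s,t) \<in> X"
    using H2b SomeX by (simp add: Q_def)
  have cP: "\<forall>s\<in>Z. \<forall>s'\<in>Z. \<forall>t\<le>m1. \<forall>t'\<le>m1. adjZ s s' \<and> iadj t t' \<and> ndiff s s' + ndiff t t' \<le> i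
              \<longrightarrow> AX (P (s,t)) (P (s',t'))"
  proof (intro ballI allI impI)
    fix s s' t t' assume s: "s \<in> Z" "s' \<in> Z" and t: "t \<le> m1" "t' \<le> m1"
      and h: "adjZ s s' \<and> iadj t t' \<and> ndiff s s' + ndiff t t' \<le> i"
    have "B (f (Some s)) (f (Some s'))" using f s h SomeX unfolding dcont_def AX_def by simp
    then have "B (w s) (w s')" using lm[of "inv a"] aG fX SomeX s unfolding dcont_def w_def by simp
    moreover have "ndiff (w s) (w s') \<le> ndiff s s'" by (simp add: ndiff_def)
    ultimately have "B (H1 (w s, t)) (H1 (w s', t'))"
      using H1c[rule_format, of "w s" "w s'" t t'] wG[OF s(1)] wG[OF s(2)] t h by simp
    then have "B (a \<otimes> H1 (w s, t)) (a \<otimes> H1 (w s', t'))"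
      using lm[OF aG] H1b wG s t unfolding dcont_def by simp
    then show "AX (P (s,t)) (P (s',t'))"
      using g H1b wG s t aG unfolding dcont_def P_def by simp
  qed
  have cQ: "\<forall>s\<in>Z. \<forall>s'\<in>Z. \<forall>t\<le>m2. \<forall>t'\<le>m2. adjZ s s' \<and> iadj t t' \<and> ndiff s s' + ndiff t t' \<le> i
              \<longrightarrow> AX (Q (s,t)) (Q (s',t'))"
    using H2c SomeX by (simp add: Q_def AX_def)
  have memL: "\<And>s t. s \<in> Z \<Longrightarrow> t \<le> m1 + m2 \<Longrightarrow> L (s,t) \<in> X"
    unfolding L_def using cat_mem[OF memP memQ] by blast
  have contL: "\<And>s s' t t'. s \<in> Z \<Longrightarrow> s' \<in> Z \<Longrightarrow> t \<le> m1 + m2 \<Longrightarrow> t' \<le> m1 + m2 \<Longrightarrow>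
      adjZ s s' \<Longrightarrow> iadj t t' \<Longrightarrow> ndiff s s' + ndiff t t' \<le> i \<Longrightarrow> AX (L (s,t)) (L (s',t'))"
    unfolding L_def using cat_cont[OF jPQ cP cQ] by blast
  have Lend: "L (s, m1 + m2) = Some s" if s: "s \<in> Z" for s
  proof (cases "m2 = 0")
    case True
    then have "L (s, m1 + m2) = Q (s, 0)" using jPQ s by (simp add: L_def cat_def)
    moreover have "H2 (Some s, m2) = Some s" using bspec[OF H2a SomeX[OF s]] by simp
    ultimately show ?thesis using True by (simp add: Q_def)
  next
    case False
    moreover have "H2 (Some s, m2) = Some s" using bspec[OF H2a SomeX[OF s]] by simp
    ultimately show ?thesis by (simp add: L_def cat_def Q_def)
  qed
  have L0: "L (s, 0) = g a" if s: "s \<in> C" for s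
  proof -
    have "H1 (w s, 0) = \<one>" using H1a wG CZ s gw f1 by auto
    then show ?thesis using aG by (simp add: L_def cat_def P_def)
  qed
  have Lmem: "\<exists>c'. L (s,t) = Some c' \<and> c' \<in> C" if s: "s \<in> C" and t: "t \<le> m1 + m2" for s t
  proof -
    have sZ: "s \<in> Z" using s CZ by auto
    have "\<forall>t<m1+m2. RX (L (s, Suc t)) (L (s, t))"
    proof (intro allI impI)
      fix t assume tt: "t < m1+m2"
      have "AX (L (s, Suc t)) (L (s,t))"
        using contL[OF sZ sZ, of "Suc t" t] reflZ[OF sZ] i tt by (simp add: iadj_def ndiff_def)
      then show "RX (L (s, Suc t)) (L (s, t))" using memL[OF sZ] tt by (simp add: RX_def)
    qed
    then have "RX\<^sup>*\<^sup>* (L (s, m1+m2)) (L (s, t))"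
      using chain_rtranclp[of "m1+m2" RX "\<lambda>t. L (s,t)" t] t by simp
    then have "RX\<^sup>*\<^sup>* (Some s) (L (s, t))" using Lend sZ by simp
    then obtain c' where "L (s,t) = Some c'" "c' \<in> Z" "RZ\<^sup>*\<^sup>* s c'"
      using RX_Some[of X adjZ s "L (s,t)" Z] sZ unfolding RX_def RZ_def AX_def X_def by auto
    moreover have "RZ\<^sup>*\<^sup>* z s" using s Cdef by auto
    ultimately show ?thesis using Cdef by auto
  qed
  define K where "K = (\<lambda>p. the (L p))"
  define c0 where "c0 = the (g a)"
  have c0C: "c0 \<in> C" using Lmem[OF zC, of 0] L0[OF zC] by (auto simp: c0_def)
  show ?thesis
    unfolding C_def[symmetric] np_contractible_def np_hequiv_def
  proof (intro exI conjI)
    show "dcont C adjZ {()} (\<lambda>_ _. True) (\<lambda>_. ())" by (simp add: dcont_def)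
    show "dcont {()} (\<lambda>_ _. True) C adjZ (\<lambda>_. c0)" using c0C CZ reflZ by (auto simp: dcont_def)
    show "np_htpy i {()} (\<lambda>_ _. True) {()} (\<lambda>_ _. True) ((\<lambda>_. ()) \<circ> (\<lambda>_. c0)) id"
      unfolding np_htpy_def np_htpy_gen_def by (rule exI[of _ 0], rule exI[of _ "\<lambda>_. ()"]) auto
    show "np_htpy i C adjZ C adjZ ((\<lambda>_. c0) \<circ> (\<lambda>_. ())) id"
      unfolding np_htpy_def np_htpy_gen_def
    proof (rule exI[of _ "m1 + m2"], rule exI[of _ K], intro conjI ballI impI)
      fix s assume s: "s \<in> C"
      show "K (s, 0) = ((\<lambda>_. c0) \<circ> (\<lambda>_. ())) s" using L0[OF s] by (simp add: K_def c0_def)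
      show "K (s, m1 + m2) = id s" using Lend s CZ by (auto simp: K_def)
    next
      fix s t assume s: "s \<in> C" and t: "t \<in> {0..m1+m2}"
      then show "K (s, t) \<in> C" using Lmem[OF s, of t] by (auto simp: K_def)
    next
      fix s s' t t' assume s: "s \<in> C" "s' \<in> C" and t: "t \<in> {0..m1+m2}" "t' \<in> {0..m1+m2}"
        and h: "adjZ s s' \<and> iadj t t' \<and> ndiff s s' + ndiff t t' \<le> i"
      obtain c1 where c1: "L (s,t) = Some c1" using Lmem[OF s(1), of t] t by auto
      obtain c2 where c2: "L (s',t') = Some c2" using Lmem[OF s(2), of t'] t by auto
      have "AX (L (s,t)) (L (s',t'))" using contL[of s s' t t'] s CZ t h by auto
      then show "adjZ (K (s, t)) (K (s', t'))" using c1 c2 by (simp add: K_def AX_def)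
    qed
  qed
qed


theorem mainTheorem14:
  fixes i :: nat and Z :: "'a set" and adjZ :: "'a \<Rightarrow> 'a \<Rightarrow> bool" and \<tau> :: "'a \<times> 'a \<Rightarrow> 'a"
  assumes "i \<in> {1, 2}"
    and "digital_image Z adjZ"
    and "dcont (Z \<times> Z) (np_adj i adjZ adjZ) Z adjZ \<tau>"
  shows "dcont (insert None (Some ` Z) \<times> insert None (Some ` Z))
            (np_adj i (adj_point_adj adjZ) (adj_point_adj adjZ))
            (insert None (Some ` Z)) (adj_point_adj adjZ) (adj_point_mult \<tau>)
       \<and> np_unital_hspace i (insert None (Some ` Z)) (adj_point_adj adjZ) None (adj_point_mult \<tau>)
       \<and> ((\<exists>z\<in>Z. \<not> np_contractible i (dcomponent Z adjZ z) adjZ) \<longrightarrow>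
            \<not> (\<exists>(G :: 'g monoid) B. np_dtop_group i G B \<and>
                 np_h_equiv i (insert None (Some ` Z)) (adj_point_adj adjZ) None (adj_point_mult \<tau>)
                   (carrier G) B \<one>\<^bsub>G\<^esub> (\<lambda>p. fst p \<otimes>\<^bsub>G\<^esub> snd p)))"
proof (intro conjI impI)
  have i1: "1 \<le> i" using assms(1) by auto
  show c: "dcont (insert None (Some ` Z) \<times> insert None (Some ` Z))
            (np_adj i (adj_point_adj adjZ) (adj_point_adj adjZ))
            (insert None (Some ` Z)) (adj_point_adj adjZ) (adj_point_mult \<tau>)"
    using mult_cont[OF assms(3)] .
  have di: "digital_image (insert None (Some ` Z)) (adj_point_adj adjZ)"
    using assms(2) unfolding digital_image_def by auto
  have h1: "np_htpy i (insert None (Some ` Z)) (adj_point_adj adjZ) (insert None (Some ` Z)) (adj_point_adj adjZ)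
      (\<lambda>x. adj_point_mult \<tau> (x, None)) id"
    unfolding np_htpy_def np_htpy_gen_def by (rule exI[of _ 0], rule exI[of _ fst]) auto
  have h2: "np_htpy i (insert None (Some ` Z)) (adj_point_adj adjZ) (insert None (Some ` Z)) (adj_point_adj adjZ)
      (\<lambda>x. adj_point_mult \<tau> (None, x)) id"
    unfolding np_htpy_def np_htpy_gen_def by (rule exI[of _ 0], rule exI[of _ fst]) auto
  show "np_unital_hspace i (insert None (Some ` Z)) (adj_point_adj adjZ) None (adj_point_mult \<tau>)"
    unfolding np_unital_hspace_def np_hspace_def using di c h1 h2 by auto
  assume "\<exists>z\<in>Z. \<not> np_contractible i (dcomponent Z adjZ z) adjZ"
  then obtain z where z: "z \<in> Z" and nc: "\<not> np_contractible i (dcomponent Z adjZ z) adjZ" by blast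
  show "\<not> (\<exists>(G :: 'g monoid) B. np_dtop_group i G B \<and>
                 np_h_equiv i (insert None (Some ` Z)) (adj_point_adj adjZ) None (adj_point_mult \<tau>)
                   (carrier G) B \<one>\<^bsub>G\<^esub> (\<lambda>p. fst p \<otimes>\<^bsub>G\<^esub> snd p))"
  proof
    assume "\<exists>(G :: 'g monoid) B. np_dtop_group i G B \<and>
                 np_h_equiv i (insert None (Some ` Z)) (adj_point_adj adjZ) None (adj_point_mult \<tau>)
                   (carrier G) B \<one>\<^bsub>G\<^esub> (\<lambda>p. fst p \<otimes>\<^bsub>G\<^esub> snd p)"
    then obtain G :: "'g monoid" and B where "np_dtop_group i G B"
      "np_h_equiv i (insert None (Some ` Z)) (adj_point_adj adjZ) None (adj_point_mult \<tau>)
                   (carrier G) B \<one>\<^bsub>G\<^esub> (\<lambda>p. fst p \<otimes>\<^bsub>G\<^esub> snd p)" by blast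
    then have "np_contractible i (dcomponent Z adjZ z) adjZ"
      using part3[OF i1 assms(2) z] by blast
    then show False using nc by simp
  qed
qed

end
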